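(* Let $R$ be a finite commutative local ring with $\mathrm{char}(R)=2^n$ for some integer $n\geq 3$. The following are equivalent: (1) $\Gamma(R)$ has genus exactly $1$; (2) $\Gamma(R)$ is connected and $4$-regular; (3) $R\cong\mathbb{Z}_{2^n}$.
   Context: All rings are finite, commutative, with nonzero identity. The involutory Cayley graph $\Gamma(R)$ is the simple graph with vertex set $R$ in which distinct $x,y$ are adjacent iff $(x-y)^2=1$. Genus means the orientable genus of a graph. *)

theory Defs
  imports Main
begin

definition is_ideal :: "'a::comm_ring_1 set \<Rightarrow> bool" where
  "is_ideal I \<longleftrightarrow> 0 \<in> I \<and> (\<forall>x\<in>I. \<forall>y\<in>I. x + y \<in> I) \<and> (\<forall>x\<in>I. - x \<in> I)
     \<and> (\<forall>r x. x \<in> I \<longrightarrow> r * x \<in> I)"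

definition maximal_ideal :: "'a::comm_ring_1 set \<Rightarrow> bool" where
  "maximal_ideal M \<longleftrightarrow> is_ideal M \<and> M \<noteq> UNIV \<and>
     (\<forall>J. is_ideal J \<and> M \<subseteq> J \<longrightarrow> J = M \<or> J = UNIV)"

definition local_ring :: "'a::comm_ring_1 itself \<Rightarrow> bool" where
  "local_ring _ \<longleftrightarrow> (\<exists>!M :: 'a set. maximal_ideal M)"

definition iso_to_Zmod :: "'a::comm_ring_1 itself \<Rightarrow> int \<Rightarrow> bool" where
  "iso_to_Zmod _ m \<longleftrightarrow> (\<exists>f :: 'a \<Rightarrow> int. bij_betw f UNIV {0..<m} \<and>
      (\<forall>x y. f (x + y) = (f x + f y) mod m) \<and>
      (\<forall>x y. f (x * y) = (f x * f y) mod m) \<and>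
      f 1 = 1 mod m)"

definition inv_cayley_adj :: "'a::comm_ring_1 \<Rightarrow> 'a \<Rightarrow> bool" where
  "inv_cayley_adj x y \<longleftrightarrow> x \<noteq> y \<and> (x - y)^2 = 1"

section \<open>Simple graphs given by a vertex set V and symmetric irreflexive adjacency E\<close>

definition darts :: "'v set \<Rightarrow> ('v \<Rightarrow> 'v \<Rightarrow> bool) \<Rightarrow> ('v \<times> 'v) set" where
  "darts V E = {(u, v). u \<in> V \<and> v \<in> V \<and> E u v}"

definition num_edges :: "'v set \<Rightarrow> ('v \<Rightarrow> 'v \<Rightarrow> bool) \<Rightarrow> nat" where
  "num_edges V E = card {{u, v} | u v. u \<in> V \<and> v \<in> V \<and> E u v}"

definition conn_rel :: "'v set \<Rightarrow> ('v \<Rightarrow> 'v \<Rightarrow> bool) \<Rightarrow> ('v \<times> 'v) set" where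
  "conn_rel V E = (darts V E)\<^sup>* \<inter> (V \<times> V)"

definition components :: "'v set \<Rightarrow> ('v \<Rightarrow> 'v \<Rightarrow> bool) \<Rightarrow> 'v set set" where
  "components V E = V // conn_rel V E"

definition graph_connected :: "'v set \<Rightarrow> ('v \<Rightarrow> 'v \<Rightarrow> bool) \<Rightarrow> bool" where
  "graph_connected V E \<longleftrightarrow> V \<noteq> {} \<and> (\<forall>x\<in>V. \<forall>y\<in>V. (x, y) \<in> (darts V E)\<^sup>*)"

definition regular :: "'v set \<Rightarrow> ('v \<Rightarrow> 'v \<Rightarrow> bool) \<Rightarrow> nat \<Rightarrow> bool" where
  "regular V E k \<longleftrightarrow> (\<forall>x\<in>V. card {y \<in> V. E x y} = k)"

text \<open>Rotation systems (combinatorial 2-cell embeddings in orientable surfaces):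
  a permutation of the darts that fixes the tail of each dart and acts as a single
  cycle on the darts leaving each vertex.\<close>
definition rotation_system :: "'v set \<Rightarrow> ('v \<Rightarrow> 'v \<Rightarrow> bool) \<Rightarrow> ('v \<times> 'v \<Rightarrow> 'v \<times> 'v) \<Rightarrow> bool" where
  "rotation_system V E \<sigma> \<longleftrightarrow> bij_betw \<sigma> (darts V E) (darts V E) \<and>
     (\<forall>d\<in>darts V E. fst (\<sigma> d) = fst d) \<and>
     (\<forall>d\<in>darts V E. \<forall>d'\<in>darts V E. fst d = fst d' \<longrightarrow> (\<exists>k. (\<sigma> ^^ k) d = d'))"

definition face_perm :: "('v \<times> 'v \<Rightarrow> 'v \<times> 'v) \<Rightarrow> 'v \<times> 'v \<Rightarrow> 'v \<times> 'v" where
  "face_perm \<sigma> d = \<sigma> (snd d, fst d)"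

definition faces :: "'v set \<Rightarrow> ('v \<Rightarrow> 'v \<Rightarrow> bool) \<Rightarrow> ('v \<times> 'v \<Rightarrow> 'v \<times> 'v) \<Rightarrow> ('v \<times> 'v) set set" where
  "faces V E \<sigma> = (\<lambda>d. {(face_perm \<sigma> ^^ k) d | k. True}) ` darts V E"

text \<open>Orientable genus of a finite simple graph: minimum over rotation systems of the
  genus given by Euler's formula, summed over components
  (V - E + F = 2c - 2g, with c the number of components; an isolated vertex
  contributes one face).\<close>
definition graph_genus :: "'v set \<Rightarrow> ('v \<Rightarrow> 'v \<Rightarrow> bool) \<Rightarrow> nat" where
  "graph_genus V E = (LEAST g :: nat. \<exists>\<sigma>. rotation_system V E \<sigma> \<and>
     2 * int g = 2 * int (card (components V E)) - int (card V) + int (num_edges V E)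
                 - int (card (faces V E \<sigma>)) - int (card {v \<in> V. \<forall>w\<in>V. \<not> E v w}))"

end

theory Submission
  imports Defs
begin

lemma ofnat0_iff:
  assumes "CHAR('a::comm_ring_1) = 2^n"
  shows "(of_nat k :: 'a) = 0 \<longleftrightarrow> 2^n dvd k"
  using assms by (simp add: of_nat_eq_0_iff_char_dvd)

lemma basic_facts:
  assumes n3: "n \<ge> 3" and ch: "CHAR('a::comm_ring_1) = 2^n"
  defines "h \<equiv> (of_nat (2^(n-1)) :: 'a)"
  shows "(2::'a) \<noteq> 0" "h \<noteq> 0" "2 * h = 0" "h * h = 0" "2 + h \<noteq> 0"
proof -
  obtain m where m: "n = m + 3" using n3 by (metis le_add_diff_inverse2)
  have z: "\<And>k. (of_nat k :: 'a) = 0 \<longleftrightarrow> 2^n dvd k" using ofnat0_iff[OF ch] .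
  have "(2::nat)^m \<ge> 1" by simp
  hence "Suc 0 < 2 * (2::nat)^m" by linarith
  hence lt: "2 + 2^(n-1) < (2::nat)^n" unfolding m by (simp add: power_add)
  show "(2::'a) \<noteq> 0"
  proof
    assume "(2::'a) = 0"
    hence "(of_nat 2 :: 'a) = 0" by simp
    hence "(2::nat)^n dvd 2" using z by blast
    hence "(2::nat)^n \<le> 2" by (rule dvd_imp_le) simp
    with lt show False by simp
  qed
  show "h \<noteq> 0"
  proof
    assume "h = 0"
    hence "(2::nat)^n dvd 2^(n-1)" using z unfolding h_def by blast
    hence "(2::nat)^n \<le> 2^(n-1)" by (rule dvd_imp_le) simp
    with lt n3 show False by simp
  qed
  have e: "(2::nat) * 2^(n-1) = 2^n" unfolding m by (simp add: power_add)
  show "2 * h = 0" unfolding h_def using z[of "2 * 2^(n-1)"] e by simp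
  have "(2::nat)^(n-1) * 2^(n-1) = 2^n * 2^(m+1)" unfolding m power_add[symmetric] by (rule arg_cong[where f="(^) 2"]) simp
  hence "(2::nat)^n dvd 2^(n-1) * 2^(n-1)" by simp
  thus "h * h = 0" unfolding h_def using z by (metis of_nat_mult)
  show "2 + h \<noteq> 0"
  proof
    assume "2 + h = 0"
    hence "(of_nat (2 + 2^(n-1)) :: 'a) = 0" unfolding h_def by simp
    hence "(2::nat)^n dvd 2 + 2^(n-1)" using z by blast
    hence "(2::nat)^n \<le> 2 + 2^(n-1)" by (rule dvd_imp_le) simp
    with lt show False by simp
  qed
qed

definition invs :: "'a::comm_ring_1 set" where "invs = {u. u^2 = 1}"

lemma four_invs:
  assumes n3: "n \<ge> 3" and ch: "CHAR('a::comm_ring_1) = 2^n"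
  defines "w \<equiv> 1 + (of_nat (2^(n-1)) :: 'a)"
  shows "w * w = 1" "card {1, -1, w, -w} = 4" "{1, -1, w, -w} \<subseteq> invs"
    and "(1::'a) \<noteq> -1" "w \<noteq> 1" "w \<noteq> -1" "w \<noteq> -w" "-w \<noteq> 1" "-w \<noteq> -1"
proof -
  note b = basic_facts[OF n3 ch]
  define h where "h = (of_nat (2^(n-1)) :: 'a)"
  have wh: "w = 1 + h" unfolding w_def h_def ..
  have hh: "h * h = 0" "2 * h = 0" "h \<noteq> 0" "2 + h \<noteq> 0" "(2::'a) \<noteq> 0" using b unfolding h_def by auto
  show ww: "w * w = 1" unfolding wh using hh by (simp add: algebra_simps mult_2[symmetric])
  have d1: "(1::'a) \<noteq> -1" using hh(5) by (metis add_eq_0_iff one_add_one)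
  have d2: "w \<noteq> 1" using hh(3) unfolding wh by simp
  have d3: "w \<noteq> -1" using hh(4) unfolding wh by (metis add.assoc add_eq_0_iff one_add_one add.commute)
  have d4: "w \<noteq> -w" using hh unfolding wh
    by (metis add_eq_0_iff distrib_left mult_1_right mult_2 add.right_neutral)
  have d5: "-w \<noteq> 1" using d3 by (metis minus_minus)
  have d6: "-w \<noteq> -1" using d2 by simp
  have d7: "-1 \<noteq> (1::'a)" using d1 by metis
  show "card {1, -1, w, -w} = 4" using d1 d2 d3 d4 d5 d6 d7
    by (subst card_insert_disjoint, simp, metis insertE empty_iff)+ simp
  show "(1::'a) \<noteq> -1" "w \<noteq> 1" "w \<noteq> -1" "w \<noteq> -w" "-w \<noteq> 1" "-w \<noteq> -1"
    using d1 d2 d3 d4 d5 d6 by auto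
  show "{1, -1, w, -w} \<subseteq> invs" unfolding invs_def using ww by (auto simp: power2_eq_square)
qed

lemma three_invs:
  assumes n3: "n \<ge> 3" and ch: "CHAR('a::comm_ring_1) = 2^n"
  and "a \<in> invs" "b \<in> invs" "(c::'a) \<in> invs"
  shows "a + b + c \<noteq> 0"
proof
  assume s: "a + b + c = 0"
  have "(a + b)^2 = c^2" using s by (metis add_eq_0_iff power2_minus add.commute)
  hence "a^2 + 2*a*b + b^2 = 1" using assms(3-5) unfolding invs_def by (simp add: power2_sum)
  hence "1 + 2*a*b + 1 = (1::'a)" using assms(3-5) unfolding invs_def by simp
  hence e: "2 * (- (a*b)) = (1::'a)" by (simp add: algebra_simps) (metis add_diff_cancel_right' add.commute diff_add_cancel minus_diff_eq eq_neg_iff_add_eq_0 add.assoc)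
  have "(2::'a)^n = of_nat (2^n)" by simp
  also have "\<dots> = 0" using ch by (metis of_nat_CHAR)
  finally have "(2::'a)^n * (- (a*b))^n = 0" by simp
  hence "(2 * (- (a*b)))^n = (0::'a)" by (simp only: power_mult_distrib)
  with e show False by simp
qed


lemma adj_iff: "inv_cayley_adj x y \<longleftrightarrow> y - (x::'a::comm_ring_1) \<in> invs"
proof -
  have "(x - y)^2 = (y - x)^2" by (metis minus_diff_eq power2_minus)
  moreover have "y - x \<in> invs \<Longrightarrow> x \<noteq> y" unfolding invs_def by auto
  ultimately show ?thesis unfolding inv_cayley_adj_def invs_def by auto
qed

lemma adj_sym: "inv_cayley_adj x y \<Longrightarrow> inv_cayley_adj y (x::'a::comm_ring_1)"
  unfolding inv_cayley_adj_def by (metis minus_diff_eq power2_minus)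

lemma nbrs: "{y. inv_cayley_adj x y} = (\<lambda>s. x + s) ` (invs :: 'a::comm_ring_1 set)"
  unfolding adj_iff by (auto simp: image_iff) (metis add_diff_cancel_left' diff_add_cancel add.commute)

lemma card_nbrs: "card {y \<in> (UNIV::'a::comm_ring_1 set). inv_cayley_adj x y} = card (invs :: 'a set)"
  using nbrs[of x] by (simp add: card_image inj_on_def)

lemma regular_iff: "regular (UNIV :: 'a::comm_ring_1 set) inv_cayley_adj k \<longleftrightarrow> card (invs :: 'a set) = k"
  unfolding regular_def using card_nbrs by auto

lemma darts_eq: "darts (UNIV :: 'a::comm_ring_1 set) inv_cayley_adj = (\<lambda>(x,s). (x, x + s)) ` (UNIV \<times> invs)"
  unfolding darts_def adj_iff by (auto simp: image_iff) (metis add_diff_cancel_left' diff_add_cancel add.commute)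

lemma card_darts: "card (darts (UNIV :: 'a::{comm_ring_1,finite} set) inv_cayley_adj) = card (UNIV::'a set) * card (invs::'a set)"
proof -
  have "inj_on (\<lambda>(x,s). (x, x + s)) (UNIV \<times> (invs::'a set))" by (auto simp: inj_on_def)
  thus ?thesis unfolding darts_eq by (simp add: card_image card_cartesian_product)
qed

lemma num_edges_darts: "2 * num_edges (UNIV :: 'a::{comm_ring_1,finite} set) inv_cayley_adj
   = card (darts (UNIV :: 'a set) inv_cayley_adj)"
proof -
  define D where "D = darts (UNIV :: 'a set) inv_cayley_adj"
  define C where "C = (\<lambda>(u,v). {(u,v),(v,u)}) ` D"
  have irr: "(u,v) \<in> D \<Longrightarrow> u \<noteq> v" for u v unfolding D_def darts_def inv_cayley_adj_def by auto
  have symD: "(u,v) \<in> D \<Longrightarrow> (v,u) \<in> D" for u v unfolding D_def darts_def using adj_sym by auto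
  have UC: "\<Union>C = D" unfolding C_def using symD by auto
  have c2: "\<forall>c\<in>C. card c = 2" unfolding C_def using irr by auto
  have dj: "\<forall>c1\<in>C. \<forall>c2\<in>C. c1 \<noteq> c2 \<longrightarrow> c1 \<inter> c2 = {}" unfolding C_def by auto
  have "2 * card C = card (\<Union>C)" by (rule card_partition) (use c2 dj in auto)
  moreover
  have Ed: "{{u, v} | u v. u \<in> (UNIV::'a set) \<and> v \<in> UNIV \<and> inv_cayley_adj u v} = (\<lambda>c. fst ` c) ` C"
    unfolding C_def D_def darts_def by (auto simp: image_iff) (metis fst_conv)+
  have "inj_on (\<lambda>c. fst ` c) C"
  proof (rule inj_onI)
    fix c c' assume "c \<in> C" "c' \<in> C" "fst ` c = fst ` c'"
    then obtain u v u' v' where "c = {(u,v),(v,u)}" "c' = {(u',v'),(v',u')}" "{u,v} = {u',v'}"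
      unfolding C_def by auto
    thus "c = c'" by (auto simp: doubleton_eq_iff)
  qed
  ultimately show ?thesis unfolding num_edges_def using UC Ed by (simp add: card_image D_def)
qed

lemma conn_rel_eq: "conn_rel (UNIV :: 'a set) E = (darts UNIV E)\<^sup>*"
  unfolding conn_rel_def by auto

lemma components_card_ge1: "card (components (UNIV :: 'a::finite set) E) \<ge> 1"
proof -
  have "finite (components (UNIV :: 'a set) E)" by simp
  moreover have "components (UNIV :: 'a set) E \<noteq> {}" unfolding components_def by simp
  ultimately show ?thesis by (simp add: Suc_le_eq card_gt_0_iff)
qed

lemma components_card1_iff: "card (components (UNIV :: 'a::finite set) E) = 1 \<longleftrightarrow> graph_connected UNIV E"
proof
  let ?r = "(darts (UNIV::'a set) E)\<^sup>*"
  assume "card (components (UNIV :: 'a set) E) = 1"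
  then obtain A where A: "UNIV // ?r = {A}" unfolding components_def conn_rel_eq by (auto simp: card_Suc_eq)
  show "graph_connected UNIV E" unfolding graph_connected_def
  proof (intro conjI ballI)
    fix x y :: 'a
    have "?r `` {x} \<in> UNIV // ?r" "?r `` {y} \<in> UNIV // ?r" by (auto intro: quotientI)
    hence "?r `` {x} = ?r `` {y}" using A by auto
    moreover have "y \<in> ?r `` {y}" by auto
    ultimately show "(x,y) \<in> ?r" by auto
  qed simp
next
  let ?r = "(darts (UNIV::'a set) E)\<^sup>*"
  assume c: "graph_connected UNIV E"
  have "UNIV // ?r = {UNIV}"
  proof -
    have "?r `` {x} = UNIV" for x using c unfolding graph_connected_def by auto
    thus ?thesis unfolding quotient_def by auto
  qed
  thus "card (components (UNIV :: 'a set) E) = 1" unfolding components_def conn_rel_eq by simp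
qed



definition cf :: "'a::comm_ring_1 \<Rightarrow> nat \<Rightarrow> 'a" where
  "cf w a = (if a = 0 then 1 else if a = 1 then w else if a = 2 then -1 else -w)"

definition orb4 :: "'a::comm_ring_1 \<Rightarrow> 'a \<Rightarrow> 'a set" where
  "orb4 w x = (\<lambda>a. cf w a * x) ` {0..<4}"

lemma enum_invs:
  assumes n3: "n \<ge> 3" and ch: "CHAR('a::{comm_ring_1,finite}) = 2^n"
  shows "\<exists>q (r::nat). r \<ge> 1 \<and> bij_betw q {0..<4*r} (invs::'a set) \<and> (\<forall>i<2*r. q (i + 2*r) = - q i)"
proof -
  define w where "w = 1 + (of_nat (2^(n-1)) :: 'a)"
  note F = four_invs[OF n3 ch, folded w_def]
  have cfsq: "cf w a * cf w a = 1" for a using F(1) unfolding cf_def by auto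
  have cfin: "cf w a \<in> invs" for a using cfsq unfolding invs_def by (simp add: power2_eq_square)
  have cfmul: "\<exists>c<4. cf w a * cf w b = cf w c" if "a < 4" "b < 4" for a b
  proof -
    let ?c = "(a mod 2 + b mod 2) mod 2 + 2 * ((a div 2 + b div 2) mod 2)"
    have "a = 0 \<or> a = 1 \<or> a = 2 \<or> a = 3" "b = 0 \<or> b = 1 \<or> b = 2 \<or> b = 3" using that by auto
    hence "cf w a * cf w b = cf w ?c" unfolding cf_def using F(1)
      by (elim disjE) (simp_all add: mult.commute)
    moreover have "?c < 4" by linarith
    ultimately show ?thesis by blast
  qed
  have cfinj: "a = b" if "a < 4" "b < 4" "cf w a = cf w b" for a b
  proof -
    have "a = 0 \<or> a = 1 \<or> a = 2 \<or> a = 3" "b = 0 \<or> b = 1 \<or> b = 2 \<or> b = 3" using that by auto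
    thus ?thesis using that(3) F(4-9) F(4-9)[THEN not_sym] unfolding cf_def by (elim disjE) auto
  qed
  have cf2: "cf w (a + 2) = - cf w a" if "a < 2" for a
    using that unfolding cf_def by (cases "a = 0") auto
  have invmul: "u * v \<in> invs" if "u \<in> invs" "v \<in> invs" for u v :: 'a
    using that unfolding invs_def by (simp add: power_mult_distrib)
  have cancel: "a = b" if "u \<in> invs" "a * u = b * u" for a b u :: 'a
  proof -
    have "a * u * u = b * u * u" using that by simp
    thus ?thesis using that(1) unfolding invs_def by (simp add: power2_eq_square mult.assoc)
  qed
  have orb_in: "orb4 w x \<subseteq> invs" if "x \<in> invs" for x
    unfolding orb4_def using cfin invmul that by auto
  have self: "x \<in> orb4 w x" for x
    unfolding orb4_def cf_def by (auto simp: image_iff intro: bexI[of _ 0])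
  have orb_sub: "orb4 w y \<subseteq> orb4 w x" if "y \<in> orb4 w x" for x y
  proof
    fix z assume "z \<in> orb4 w y"
    then obtain b where b: "b < 4" "z = cf w b * y" unfolding orb4_def by auto
    note H_that = that
    obtain a where a: "a < 4" "y = cf w a * x" using H_that unfolding orb4_def by auto
    obtain c where c: "c < 4" "cf w b * cf w a = cf w c" using cfmul a b by blast
    have "z = cf w c * x" using a b c by (simp add: mult.assoc[symmetric])
    thus "z \<in> orb4 w x" unfolding orb4_def using c by auto
  qed
  have orb_back: "x \<in> orb4 w y" if "y \<in> orb4 w x" for x y
  proof -
    note H_that = that
    obtain a where a: "a < 4" "y = cf w a * x" using H_that unfolding orb4_def by auto
    have "x = cf w a * y" using a cfsq by (simp add: mult.assoc[symmetric])
    thus ?thesis unfolding orb4_def using a by auto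
  qed
  have orb_eq: "orb4 w y = orb4 w x" if "y \<in> orb4 w x" for x y
    using orb_sub orb_back that by blast
  define Cl where "Cl = orb4 w ` invs"
  define rep where "rep c = (SOME u. u \<in> c)" for c :: "'a set"
  define R where "R = rep ` Cl"
  have repin: "rep c \<in> c" if "c \<in> Cl" for c
  proof -
    note H_that = that
    obtain u where "c = orb4 w u" using H_that unfolding Cl_def by auto
    hence "u \<in> c" using self by auto
    thus ?thesis unfolding rep_def by (rule someI)
  qed
  have Rinv: "x \<in> invs" if "x \<in> R" for x
  proof -
    note H_that = that
    obtain c where c: "c \<in> Cl" "x = rep c" using H_that unfolding R_def by auto
    then obtain u where u: "u \<in> invs" "c = orb4 w u" unfolding Cl_def by auto
    thus ?thesis using repin[OF c(1)] c orb_in by auto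
  qed
  have Rorb: "orb4 w x = c" if "c \<in> Cl" "x = rep c" for c x
  proof -
    note H_that = that
    obtain u where u: "c = orb4 w u" using H_that unfolding Cl_def by auto
    thus ?thesis using repin[OF that(1)] that orb_eq by auto
  qed
  have Runiq: "x = y" if "x \<in> R" "y \<in> R" "y \<in> orb4 w x" for x y
  proof -
    note H_that = that
    obtain c where c: "c \<in> Cl" "x = rep c" using H_that unfolding R_def by auto
    note H_that = that
    obtain c' where c': "c' \<in> Cl" "y = rep c'" using H_that unfolding R_def by auto
    have "orb4 w x = c" "orb4 w y = c'" using Rorb c c' by auto
    moreover have "orb4 w y = orb4 w x" using orb_eq that(3) by auto
    ultimately show ?thesis using c c' by simp
  qed
  have Rcov: "\<exists>x\<in>R. u \<in> orb4 w x" if "u \<in> invs" for u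
  proof -
    have c: "orb4 w u \<in> Cl" using that unfolding Cl_def by auto
    have "orb4 w (rep (orb4 w u)) = orb4 w u" using Rorb[OF c] by auto
    thus ?thesis using self[of u] c unfolding R_def by (intro bexI[of _ "rep (orb4 w u)"]) auto
  qed
  obtain L where L: "set L = R" "distinct L" using finite_distinct_list[of R] by auto
  define r where "r = length L"
  have "1 \<in> (invs::'a set)" unfolding invs_def by simp
  then obtain x0 where "x0 \<in> R" using Rcov by blast
  hence r1: "r \<ge> 1" unfolding r_def using L by (cases L) auto
  define q where "q i = cf w (i div r) * L ! (i mod r)" for i
  have Lin: "L ! (i mod r) \<in> R" for i
  proof -
    have "i mod r < length L" using r1 unfolding r_def by (intro mod_less_divisor) (cases L, auto)
    thus ?thesis using L(1) nth_mem by blast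
  qed
  have inj: "inj_on q {0..<4*r}"
  proof (rule inj_onI)
    fix i j assume i: "i \<in> {0..<4*r}" and j: "j \<in> {0..<4*r}" and e: "q i = q j"
    define x where "x = L ! (i mod r)"
    define y where "y = L ! (j mod r)"
    have ia: "i div r < 4" "j div r < 4" using i j r1 by (auto simp: less_mult_imp_div_less mult.commute)
    have e': "cf w (i div r) * x = cf w (j div r) * y" using e unfolding q_def x_def y_def .
    have "cf w (j div r) * (cf w (i div r) * x) = y" using e' cfsq by (simp add: mult.assoc[symmetric])
    then obtain c where "c < 4" "y = cf w c * x" using cfmul ia by (metis mult.assoc)
    hence "y \<in> orb4 w x" unfolding orb4_def by auto
    hence xy: "x = y" using Runiq Lin unfolding x_def y_def by blast
    hence "cf w (i div r) = cf w (j div r)" using cancel e' Rinv Lin unfolding x_def by metis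
    hence d: "i div r = j div r" using cfinj ia by blast
    have "i mod r < length L" "j mod r < length L" using r1 unfolding r_def by (intro mod_less_divisor; cases L; auto)+
    hence "i mod r = j mod r" using xy L(2) nth_eq_iff_index_eq unfolding x_def y_def by blast
    thus "i = j" using d by (metis div_mult_mod_eq)
  qed
  have img: "q ` {0..<4*r} = invs"
  proof
    show "q ` {0..<4*r} \<subseteq> invs" unfolding q_def using cfin invmul Rinv Lin by auto
    show "invs \<subseteq> q ` {0..<4*r}"
    proof
      fix u :: 'a assume "u \<in> invs"
      then obtain x where x: "x \<in> R" "u \<in> orb4 w x" using Rcov by blast
      then obtain a where a: "a < 4" "u = cf w a * x" unfolding orb4_def by auto
      obtain j where j: "j < r" "x = L ! j" using x L unfolding r_def by (metis in_set_conv_nth)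
      have "(a * r + j) div r = a" "(a * r + j) mod r = j" using j by auto
      hence "u = q (a * r + j)" unfolding q_def using a j by simp
      moreover have "a * r + j < 4 * r"
      proof -
        have "a * r + j < (a + 1) * r" using j by simp
        moreover have "(a + 1) * r \<le> 4 * r" using a by (intro mult_le_mono1) simp
        ultimately show ?thesis by linarith
      qed
      ultimately show "u \<in> q ` {0..<4*r}" by auto
    qed
  qed
  have anti: "q (i + 2*r) = - q i" if "i < 2*r" for i
  proof -
    have "(i + 2*r) div r = i div r + 2" "(i + 2*r) mod r = i mod r" using r1 by auto
    moreover have "i div r < 2" using that by (simp add: less_mult_imp_div_less mult.commute)
    ultimately show ?thesis unfolding q_def using cf2 by simp
  qed
  show ?thesis using r1 inj img anti unfolding bij_betw_def by blast
qed


definition orb :: "('b \<Rightarrow> 'b) \<Rightarrow> 'b \<Rightarrow> 'b set" where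
  "orb p a = {(p ^^ k) a | k. True}"

lemma pow_in_orb: "(p ^^ k) a \<in> orb p a"
  unfolding orb_def by blast

lemma orb_first4: "{a, p a, p (p a), p (p (p a))} \<subseteq> orb p a"
proof -
  have "(p ^^ 0) a \<in> orb p a" "(p ^^ 1) a \<in> orb p a" "(p ^^ 2) a \<in> orb p a" "(p ^^ 3) a \<in> orb p a"
    by (rule pow_in_orb)+
  thus ?thesis by (simp add: numeral_eq_Suc)
qed

locale perm_on =
  fixes p :: "'b \<Rightarrow> 'b" and A :: "'b set"
  assumes fin: "finite A" and maps: "\<And>a. a \<in> A \<Longrightarrow> p a \<in> A" and inj: "inj_on p A"
begin

lemma pow_in: "a \<in> A \<Longrightarrow> (p ^^ k) a \<in> A"
  by (induction k) (auto simp: maps)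

lemma pow_inj: "a \<in> A \<Longrightarrow> b \<in> A \<Longrightarrow> (p ^^ k) a = (p ^^ k) b \<Longrightarrow> a = b"
proof (induction k)
  case (Suc k)
  then show ?case using inj pow_in by (auto simp: inj_on_def)
qed simp

lemma orb_sub: "a \<in> A \<Longrightarrow> orb p a \<subseteq> A"
  unfolding orb_def using pow_in by auto

lemma self_in_orb: "a \<in> orb p a"
  unfolding orb_def by (auto intro: exI[of _ 0])

lemma period: assumes a: "a \<in> A" shows "\<exists>N>0. (p ^^ N) a = a"
proof -
  have "\<not> inj_on (\<lambda>k. (p ^^ k) a) {0..card A}"
  proof
    assume "inj_on (\<lambda>k. (p ^^ k) a) {0..card A}"
    hence "card ((\<lambda>k. (p ^^ k) a) ` {0..card A}) = card A + 1" by (simp add: card_image)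
    moreover have "(\<lambda>k. (p ^^ k) a) ` {0..card A} \<subseteq> A" using pow_in a by auto
    hence "card ((\<lambda>k. (p ^^ k) a) ` {0..card A}) \<le> card A" using fin by (simp add: card_mono)
    ultimately show False by simp
  qed
  then obtain i j where ij: "i < j" "(p ^^ i) a = (p ^^ j) a"
    unfolding inj_on_def by (metis linorder_neqE_nat)
  have "(p ^^ j) a = (p ^^ i) ((p ^^ (j - i)) a)" using ij(1)
    by (metis funpow_add le_add_diff_inverse less_imp_le o_apply)
  hence "(p ^^ (j - i)) a = a" using ij pow_inj[of a "(p ^^ (j - i)) a" i] pow_in a by metis
  thus ?thesis using ij(1) by (intro exI[of _ "j - i"]) auto
qed

lemma period_mult: "(p ^^ N) a = a \<Longrightarrow> (p ^^ (N * m)) a = a"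
proof (induction m)
  case (Suc m)
  then show ?case by (metis funpow_add mult_Suc_right o_apply)
qed simp

lemma orb_trans: "b \<in> orb p a \<Longrightarrow> orb p b \<subseteq> orb p a"
  unfolding orb_def by (auto simp: funpow_add[symmetric, unfolded o_def] intro: exI) (metis funpow_add o_apply)

lemma orb_back: assumes a: "a \<in> A" and b: "b \<in> orb p a" shows "a \<in> orb p b"
proof -
  obtain j where j: "b = (p ^^ j) a" using b unfolding orb_def by auto
  obtain N where N: "N > 0" "(p ^^ N) a = a" using period a by auto
  have M: "(p ^^ (N * j)) a = a" using period_mult N by blast
  have "N * j \<ge> j" using N by simp
  hence "(p ^^ (N * j - j)) b = (p ^^ (N * j)) a" unfolding j
    by (metis funpow_add le_add_diff_inverse2 o_apply)
  thus ?thesis using M unfolding orb_def by auto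
qed

lemma orb_eq: "a \<in> A \<Longrightarrow> b \<in> orb p a \<Longrightarrow> orb p b = orb p a"
  using orb_trans orb_back by blast

lemma orb_disj: assumes "a \<in> A" "b \<in> A" "orb p a \<noteq> orb p b" shows "orb p a \<inter> orb p b = {}"
proof (rule ccontr)
  assume "orb p a \<inter> orb p b \<noteq> {}"
  then obtain c where "c \<in> orb p a" "c \<in> orb p b" by auto
  thus False using orb_eq assms by metis
qed

lemma union_orbs: "\<Union> (orb p ` A) = A"
  using orb_sub self_in_orb by blast

lemma count_lower: assumes "\<And>a. a \<in> A \<Longrightarrow> card (orb p a) \<ge> m"
  shows "m * card (orb p ` A) \<le> card A"
proof -
  have "card A = card (\<Union> (orb p ` A))" using union_orbs by simp
  also have "\<dots> = sum card (orb p ` A)"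
  proof (rule card_Union_disjoint)
    show "pairwise disjnt (orb p ` A)" unfolding pairwise_def disjnt_def using orb_disj by auto
    show "\<And>X. X \<in> orb p ` A \<Longrightarrow> finite X" using orb_sub fin finite_subset by blast
  qed
  also have "\<dots> \<ge> sum (\<lambda>_. m) (orb p ` A)" by (rule sum_mono) (use assms in auto)
  finally show ?thesis by (simp add: mult.commute)
qed

lemma count_exact: assumes "\<And>a. a \<in> A \<Longrightarrow> card (orb p a) = m"
  shows "m * card (orb p ` A) = card A"
proof -
  have "m * card (orb p ` A) = card (\<Union> (orb p ` A))"
  proof (rule card_partition)
    show "finite (orb p ` A)" using fin by simp
    show "finite (\<Union> (orb p ` A))" using union_orbs fin by simp
    show "\<And>c. c \<in> orb p ` A \<Longrightarrow> card c = m" using assms by auto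
    show "\<And>c1 c2. c1 \<in> orb p ` A \<Longrightarrow> c2 \<in> orb p ` A \<Longrightarrow> c1 \<noteq> c2 \<Longrightarrow> c1 \<inter> c2 = {}"
      using orb_disj by auto
  qed
  thus ?thesis using union_orbs by simp
qed

end


lemma sq1:
  fixes k N m :: nat
  assumes N: "N = 2^m" "m \<ge> 1" and k: "k < 4 * N" "1 \<le> k" and dv: "4 * N dvd k * k - 1"
  shows "k = 1 \<or> k = 2 * N + 1 \<or> k = 2 * N - 1 \<or> k = 4 * N - 1"
proof -
  have "odd k"
  proof
    assume ek: "even k"
    have kk: "k * k - 1 + 1 = k * k" using k(2) by (simp add: Suc_le_eq)
    have e1: "even (k * k)" using ek by simp
    have e2: "even (k * k - 1)" using dv by (rule dvd_trans[rotated]) simp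
    have "even (k * k - 1 + 1)" using kk e1 by simp
    with e2 show False by simp
  qed
  then obtain b where b: "k = 2 * b + 1" by (metis oddE)
  have "k * k - 1 = 4 * (b * (b + 1))" unfolding b by (simp add: algebra_simps)
  hence "4 * N dvd 4 * (b * (b + 1))" using dv by simp
  hence Nd: "N dvd b * (b + 1)" using nat_mult_dvd_cancel1[of 4 N "b * (b + 1)"] by (simp only: zero_less_numeral simp_thms)
  show ?thesis
  proof (cases "even b")
    case True
    hence "coprime N (b + 1)" unfolding N by (simp add: coprime_power_left_iff)
    hence "N dvd b" using Nd coprime_dvd_mult_left_iff by blast
    then obtain t where t: "b = N * t" by blast
    have "2 * (N * t) + 1 < 4 * N" using k b t by simp
    hence "N * t < N * 2" by linarith
    hence "t < 2" by (simp only: mult_less_cancel1)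
    hence "t = 0 \<or> t = 1" by auto
    thus ?thesis using b t by auto
  next
    case False
    hence "coprime N b" unfolding N by (simp add: coprime_power_left_iff)
    hence "N dvd b + 1" using Nd coprime_dvd_mult_right_iff by blast
    then obtain t where t: "b + 1 = N * t" by blast
    have "t \<ge> 1" using t by (cases t) auto
    have "2 * (N * t) < 4 * N + 1" using k b t by simp
    hence "N * t \<le> N * 2" by linarith
    moreover have "N > 0" using N by simp
    ultimately have "t \<le> 2" by simp
    hence "t = 1 \<or> t = 2" using \<open>t \<ge> 1\<close> by auto
    moreover have "k = 2 * (N * t) - 1" using b t by simp
    ultimately show ?thesis by auto
  qed
qed


lemma dart_iff: "(x, y) \<in> darts (UNIV :: 'a::comm_ring_1 set) inv_cayley_adj \<longleftrightarrow> y - x \<in> invs"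
  unfolding darts_def adj_iff by simp

lemma faces_orb: "faces V E \<sigma> = orb (face_perm \<sigma>) ` darts V E"
  unfolding faces_def orb_def by simp

lemma perm_on_face:
  assumes rs: "rotation_system (UNIV :: 'a::{comm_ring_1,finite} set) inv_cayley_adj \<sigma>"
  shows "perm_on (face_perm \<sigma>) (darts UNIV inv_cayley_adj)"
proof
  let ?D = "darts (UNIV :: 'a set) inv_cayley_adj"
  have bj: "bij_betw \<sigma> ?D ?D" using rs unfolding rotation_system_def by auto
  have sw: "(snd b, fst b) \<in> ?D" if "b \<in> ?D" for b
    using that adj_sym unfolding darts_def by auto
  show "finite ?D" by simp
  show "face_perm \<sigma> a \<in> ?D" if "a \<in> ?D" for a
    unfolding face_perm_def using sw[OF that] bj by (simp add: bij_betw_apply)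
  show "inj_on (face_perm \<sigma>) ?D"
  proof (rule inj_onI)
    fix a b assume a: "a \<in> ?D" and b: "b \<in> ?D" and e: "face_perm \<sigma> a = face_perm \<sigma> b"
    have "(snd a, fst a) = (snd b, fst b)"
      using e sw[OF a] sw[OF b] bj unfolding face_perm_def bij_betw_def inj_on_def by blast
    thus "a = b" by (simp add: prod_eq_iff)
  qed
qed

lemma card4: "a \<noteq> b \<Longrightarrow> a \<noteq> c \<Longrightarrow> a \<noteq> d \<Longrightarrow> b \<noteq> c \<Longrightarrow> b \<noteq> d \<Longrightarrow> c \<noteq> d \<Longrightarrow> card {a, b, c, d} = 4"
  by simp

lemma lower_faces:
  assumes n3: "n \<ge> 3" and ch: "CHAR('a::{comm_ring_1,finite}) = 2^n"
    and rs: "rotation_system (UNIV :: 'a set) inv_cayley_adj \<sigma>"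
  shows "4 * card (faces UNIV inv_cayley_adj \<sigma>) \<le> card (darts (UNIV :: 'a set) inv_cayley_adj)"
proof -
  let ?D = "darts (UNIV :: 'a set) inv_cayley_adj"
  let ?p = "face_perm \<sigma>"
  interpret P: perm_on ?p ?D by (rule perm_on_face[OF rs])
  have bj: "bij_betw \<sigma> ?D ?D" using rs unfolding rotation_system_def by auto
  have sfst: "fst (\<sigma> d) = fst d" if "d \<in> ?D" for d using rs that unfolding rotation_system_def by auto
  have sw: "(snd b, fst b) \<in> ?D" if "b \<in> ?D" for b
    using that adj_sym unfolding darts_def by auto
  have fstp: "fst (?p b) = snd b" if "b \<in> ?D" for b
    unfolding face_perm_def using sfst[OF sw[OF that]] by simp
  note F4 = four_invs[OF n3 ch]
  have no1: "?p b \<noteq> b" if "b \<in> ?D" for b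
  proof -
    obtain u v where b: "b = (u, v)" by fastforce
    have "u \<noteq> v" using that unfolding b darts_def inv_cayley_adj_def by auto
    thus ?thesis using fstp[OF that] b by auto
  qed
  have no2: "?p (?p b) \<noteq> b" if "b \<in> ?D" for b
  proof
    assume e: "?p (?p b) = b"
    obtain u v where b: "b = (u, v)" by fastforce
    have pb: "?p b \<in> ?D" using P.maps that .
    have "fst (?p (?p b)) = snd (?p b)" using fstp[OF pb] .
    hence s: "snd (?p b) = u" using e b by simp
    have "fst (?p b) = v" using fstp[OF that] b by simp
    hence pbe: "?p b = (v, u)" using s by (metis prod.collapse)
    hence fix1: "\<sigma> (v, u) = (v, u)" unfolding face_perm_def b by simp
    have vu: "(v, u) \<in> ?D" using sw[OF that] b by simp
    have fixk: "(\<sigma> ^^ k) (v, u) = (v, u)" for k by (induction k) (auto simp: fix1)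
    have "1 \<in> (invs::'a set)" "-1 \<in> (invs::'a set)" using F4(3) by auto
    hence d1: "(v, v + 1) \<in> ?D" "(v, v + -1) \<in> ?D" unfolding dart_iff by auto
    have "\<exists>k. (\<sigma> ^^ k) (v, u) = (v, v + 1)" "\<exists>k. (\<sigma> ^^ k) (v, u) = (v, v + -1)"
      using rs vu d1 unfolding rotation_system_def by auto
    hence "(v, v + 1) = (v, v + -1)" using fixk by metis
    thus False using F4(4) by simp
  qed
  have no3: "?p (?p (?p b)) \<noteq> b" if bD: "b \<in> ?D" for b
  proof
    assume e: "?p (?p (?p b)) = b"
    obtain u v where b: "b = (u, v)" by fastforce
    have pb: "?p b \<in> ?D" using P.maps that .
    have ppb: "?p (?p b) \<in> ?D" using P.maps pb .
    obtain y where y: "?p b = (v, y)" using fstp[OF bD] b by (metis prod.collapse snd_conv)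
    obtain z where z: "?p (?p b) = (y, z)" using fstp[OF pb] y by (metis prod.collapse snd_conv)
    have "fst (?p (?p (?p b))) = z" using fstp[OF ppb] z by simp
    hence zu: "z = u" using e b by simp
    have "(u, v) \<in> ?D" "(v, y) \<in> ?D" "(y, z) \<in> ?D" using bD pb ppb y z b by auto
    hence "v - u \<in> invs" "y - v \<in> invs" "z - y \<in> invs" unfolding dart_iff by auto
    moreover have "(v - u) + (y - v) + (z - y) = 0" using zu by simp
    ultimately show False using three_invs[OF n3 ch] by blast
  qed
  have c4: "card (orb ?p a) \<ge> 4" if "a \<in> ?D" for a
  proof -
    have pa1: "?p a \<in> ?D" by (rule P.maps[OF that])
    have pa2: "?p (?p a) \<in> ?D" by (rule P.maps[OF pa1])
    note pa = pa1 pa2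
    have sub: "{a, ?p a, ?p (?p a), ?p (?p (?p a))} \<subseteq> orb ?p a" by (rule orb_first4[where p = "face_perm \<sigma>" and a = a])
    have "card {a, ?p a, ?p (?p a), ?p (?p (?p a))} = 4"
      by (rule card4[OF no1[OF that, THEN not_sym] no2[OF that, THEN not_sym] no3[OF that, THEN not_sym]
           no1[OF pa(1), THEN not_sym] no2[OF pa(1), THEN not_sym] no1[OF pa(2), THEN not_sym]])
    moreover have "finite (orb ?p a)" by (rule finite_subset[OF P.orb_sub[OF that]]) simp
    hence "card {a, ?p a, ?p (?p a), ?p (?p (?p a))} \<le> card (orb ?p a)" by (rule card_mono) (rule sub)
    ultimately show ?thesis by linarith
  qed
  have "4 * card (orb ?p ` ?D) \<le> card ?D" by (rule P.count_lower) (rule c4)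
  thus ?thesis unfolding faces_orb .
qed



lemma sum_split_nat: "(\<Sum>l<k+m. f l) = (\<Sum>l<k. f l) + (\<Sum>l<m. f (k + l))" for f :: "nat \<Rightarrow> 'b::comm_monoid_add"
  by (induction m) (auto simp: add.assoc)

lemma coprime_4r: "coprime (4 * r) (2 * r + 1 :: nat)"
proof -
  have "coprime (2 * r + 1) (2 * r :: nat)" using coprime_Suc_left_nat[of "2*r"] by simp
  moreover have "coprime (2 * r + 1) (2 :: nat)" by (simp add: coprime_commute)
  ultimately have "coprime (2 * r + 1) (2 * (2 * r) :: nat)" using coprime_mult_right_iff by blast
  moreover have "2 * (2 * r) = 4 * (r::nat)" by simp
  ultimately show ?thesis by (metis coprime_commute)
qed

lemma construction:
  assumes n3: "n \<ge> 3" and ch: "CHAR('a::{comm_ring_1,finite}) = 2^n"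
  shows "\<exists>\<sigma> r. r \<ge> 1 \<and> card (invs::'a set) = 4*r \<and> rotation_system (UNIV::'a set) inv_cayley_adj \<sigma>
            \<and> card (faces UNIV inv_cayley_adj \<sigma>) = card (UNIV::'a set)"
proof -
  obtain q and r :: nat where r1: "r \<ge> 1" and bq: "bij_betw q {0..<4*r} (invs::'a set)"
    and anti: "\<And>i. i < 2*r \<Longrightarrow> q (i + 2*r) = - q i"
    using enum_invs[OF n3 ch] by blast
  let ?D = "darts (UNIV :: 'a set) inv_cayley_adj"
  define d where "d = 4 * r"
  define k where "k = 2 * r"
  have dk: "d = k + k" unfolding d_def k_def by simp
  have d4: "d \<ge> 4" using r1 unfolding d_def by simp
  have cardS: "card (invs::'a set) = d" using bij_betw_same_card[OF bq] unfolding d_def by simp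
  have bq': "bij_betw q {0..<d} invs" using bq unfolding d_def .
  have qinjon: "inj_on q {0..<d}" by (rule bij_betw_imp_inj_on[OF bq'])
  have qimg: "q ` {0..<d} = invs" by (rule bij_betw_imp_surj_on[OF bq'])
  define idx where "idx = the_inv_into {0..<d} q"
  have qin: "q i \<in> invs" if "i < d" for i
  proof -
    have "i \<in> {0..<d}" using that by simp
    thus ?thesis by (rule bij_betw_apply[OF bq'])
  qed
  have qinj: "i = j" if "i < d" "j < d" "q i = q j" for i j
  proof -
    have "i \<in> {0..<d}" "j \<in> {0..<d}" using that by simp_all
    thus ?thesis using inj_onD[OF qinjon] that(3) by blast
  qed
  have idxq: "idx (q i) = i" if "i < d" for i
  proof -
    have "i \<in> {0..<d}" using that by simp
    thus ?thesis unfolding idx_def by (rule the_inv_into_f_f[OF qinjon])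
  qed
  have qidx: "idx s < d \<and> q (idx s) = s" if "s \<in> invs" for s
  proof -
    have "s \<in> q ` {0..<d}" using qimg that by simp
    then obtain i where "i < d" "s = q i" by auto
    thus ?thesis using idxq by auto
  qed
  define \<rho> where "\<rho> s = q ((idx s + 1) mod d)" for s
  define \<sigma> where "\<sigma> = (\<lambda>(x::'a, y::'a). (x, x + \<rho> (y - x)))"
  have \<sigma>q: "\<sigma> (x, x + q i) = (x, x + q ((i + 1) mod d))" if "i < d" for x i
    unfolding \<sigma>_def \<rho>_def using idxq[OF that] by simp
  have \<sigma>pow: "(\<sigma> ^^ m) (x, x + q i) = (x, x + q ((i + m) mod d))" if "i < d" for x i m
  proof (induction m)
    case 0 then show ?case using that by simp
  next
    case (Suc m)
    have "(i + m) mod d < d" using d4 by simp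
    hence "\<sigma> (x, x + q ((i + m) mod d)) = (x, x + q (((i + m) mod d + 1) mod d))" by (rule \<sigma>q)
    also have "((i + m) mod d + 1) mod d = (i + Suc m) mod d" by (simp add: mod_Suc_eq)
    finally show ?case using Suc by simp
  qed
  have dartform: "\<exists>x i. i < d \<and> a = (x, x + q i)" if "a \<in> ?D" for a
  proof -
    obtain x y where a: "a = (x, y)" by fastforce
    have "y - x \<in> invs" using that unfolding a dart_iff .
    hence "idx (y - x) < d" "y = x + q (idx (y - x))" using qidx by auto
    thus ?thesis unfolding a by blast
  qed
  have dartin: "(x, x + q i) \<in> ?D" if "i < d" for x i
    unfolding dart_iff using qin[OF that] by simp
  have neg: "- q i = q ((i + k) mod d)" if "i < d" for i
  proof (cases "i < k")
    case True
    hence "(i + k) mod d = i + k" unfolding dk by simp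
    thus ?thesis using anti[of i] True unfolding k_def by simp
  next
    case False
    note H_that = that
    obtain j where j: "i = j + k" "j < k" using False H_that unfolding dk by (metis add.commute less_imp_add_positive add_less_cancel_left not_less le_Suc_ex)
    have "q i = - q j" using anti[of j] j unfolding k_def by simp
    moreover have "(i + k) mod d = j"
    proof -
      have "i + k = j + d" using j unfolding dk by simp
      hence "(i + k) mod d = j mod d" by simp
      thus ?thesis using j unfolding dk by simp
    qed
    ultimately show ?thesis by simp
  qed
  let ?p = "face_perm \<sigma>"
  have pq: "?p (x, x + q i) = (x + q i, x + q i + q ((i + k + 1) mod d))" if "i < d" for x i
  proof -
    have "x - (x + q i) = q ((i + k) mod d)" using neg[OF that] by simp
    moreover have "idx (q ((i + k) mod d)) = (i + k) mod d" using idxq d4 by simp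
    ultimately show ?thesis unfolding face_perm_def \<sigma>_def \<rho>_def by (simp add: mod_Suc_eq)
  qed
  define ij where "ij i j = (i + j * (k + 1)) mod d" for i j
  define xs where "xs x i j = x + (\<Sum>l<j. q (ij i l))" for x i j
  have ijd: "ij i j < d" for i j unfolding ij_def using d4 by simp
  have ppow: "(?p ^^ j) (x, x + q i) = (xs x i j, xs x i j + q (ij i j))" if "i < d" for x i j
  proof (induction j)
    case 0 then show ?case unfolding xs_def ij_def using that by simp
  next
    case (Suc j)
    have "(?p ^^ Suc j) (x, x + q i) = ?p (xs x i j, xs x i j + q (ij i j))" using Suc by simp
    also have "\<dots> = (xs x i j + q (ij i j), xs x i j + q (ij i j) + q ((ij i j + k + 1) mod d))"
      using pq ijd by blast
    also have "(ij i j + k + 1) mod d = ij i (Suc j)"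
    proof -
      have "(ij i j + k + 1) mod d = ((i + j*(k+1)) mod d + (k+1)) mod d" unfolding ij_def by (simp only: add.assoc)
      also have "\<dots> = (i + j*(k+1) + (k+1)) mod d" by (rule mod_add_left_eq)
      also have "i + j*(k+1) + (k+1) = i + Suc j * (k+1)" by simp
      finally show ?thesis unfolding ij_def .
    qed
    also have "xs x i j + q (ij i j) = xs x i (Suc j)" unfolding xs_def by simp
    finally show ?case .
  qed
  have sumzero: "(\<Sum>l<d. q (ij i l)) = 0" if "i < d" for i
  proof -
    have sh: "q (ij i (k + l)) = - q (ij i l)" for l
    proof -
      have "i + (k + l) * (k + 1) = (i + l * (k + 1)) + k + d * r" unfolding d_def k_def
        by (simp add: algebra_simps)
      hence "ij i (k + l) = (ij i l + k) mod d" unfolding ij_def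
        by (metis mod_add_left_eq mod_mult_self1 mult.commute)
      thus ?thesis using neg[OF ijd[of i l]] by simp
    qed
    have "(\<Sum>l<d. q (ij i l)) = (\<Sum>l<k. q (ij i l)) + (\<Sum>l<k. q (ij i (k + l)))"
      unfolding dk by (rule sum_split_nat)
    also have "\<dots> = 0" unfolding sh by (simp add: sum_negf)
    finally show ?thesis .
  qed
  have pper: "(?p ^^ d) a = a" if "a \<in> ?D" for a
  proof -
    note H_that = that
    obtain x i where xi: "i < d" "a = (x, x + q i)" using dartform[OF H_that] by blast
    have "(i + d * (k + 1)) mod d = i mod d" by (metis mod_mult_self1 mult.commute)
    hence "ij i d = i" unfolding ij_def using xi(1) by simp
    moreover have "xs x i d = x" unfolding xs_def using sumzero[OF xi(1)] by simp
    ultimately show ?thesis using ppow[OF xi(1)] xi(2) by simp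
  qed
  have ijinj: "j = j'" if "j < d" "j' < d" "ij i j = ij i j'" for i j j'
  proof -
    have cop: "coprime d (k + 1)" unfolding d_def k_def using coprime_4r by simp
    have *: "j = j'" if "j \<le> j'" "j' < d" "ij i j = ij i j'" for j j'
    proof -
      have "d dvd (i + j' * (k + 1)) - (i + j * (k + 1))"
        using that unfolding ij_def by (subst mod_eq_dvd_iff_nat[symmetric]) (auto intro: add_le_mono mult_le_mono)
      moreover have "(i + j' * (k + 1)) - (i + j * (k + 1)) = (j' - j) * (k + 1)"
        by (simp only: add_diff_cancel_left diff_mult_distrib)
      ultimately have "d dvd (j' - j) * (k + 1)" by simp
      hence "d dvd (j' - j)" using coprime_dvd_mult_left_iff[OF cop] by blast
      moreover have "j' - j < d" using that by simp
      ultimately have "j' - j = 0" by (metis dvd_imp_le neq0_conv not_less)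
      thus ?thesis using that by simp
    qed
    show ?thesis using *[of j j'] *[of j' j] that by (cases "j \<le> j'") auto
  qed
  have \<sigma>D: "\<sigma> a \<in> ?D" if "a \<in> ?D" for a
    using dartform[OF that] \<sigma>q dartin d4 by auto
  have \<sigma>per: "(\<sigma> ^^ d) a = a" if "a \<in> ?D" for a
  proof -
    note H_that = that
    obtain x i where xi: "i < d" "a = (x, x + q i)" using dartform[OF H_that] by blast
    show ?thesis using \<sigma>pow[OF xi(1)] xi by simp
  qed
  have \<sigma>inj: "inj_on \<sigma> ?D"
  proof (rule inj_onI)
    fix a b assume a: "a \<in> ?D" and b: "b \<in> ?D" and e: "\<sigma> a = \<sigma> b"
    have "Suc (d - 1) = d" using d4 by simp
    hence "(\<sigma> ^^ d) a = (\<sigma> ^^ (d - 1)) (\<sigma> a)" "(\<sigma> ^^ d) b = (\<sigma> ^^ (d - 1)) (\<sigma> b)"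
      by (metis funpow_Suc_right o_apply)+
    thus "a = b" using \<sigma>per a b e by simp
  qed
  have rs: "rotation_system (UNIV::'a set) inv_cayley_adj \<sigma>"
    unfolding rotation_system_def
  proof (intro conjI ballI impI)
    have "\<sigma> ` ?D = ?D" by (rule endo_inj_surj) (use \<sigma>D \<sigma>inj in auto)
    thus "bij_betw \<sigma> ?D ?D" using \<sigma>inj unfolding bij_betw_def by simp
  next
    fix a show "fst (\<sigma> a) = fst a" unfolding \<sigma>_def by (simp add: case_prod_beta)
  next
    fix a b assume a: "a \<in> ?D" and b: "b \<in> ?D" and f: "fst a = fst b"
    obtain x i where xi: "i < d" "a = (x, x + q i)" using dartform[OF a] by blast
    obtain y j where yj: "j < d" "b = (y, y + q j)" using dartform[OF b] by blast
    have xy: "y = x" using f xi yj by simp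
    have "(i + (j + d - i)) mod d = j" using xi(1) yj(1) by simp
    hence "(\<sigma> ^^ (j + d - i)) a = b" using \<sigma>pow[OF xi(1)] xi yj xy by simp
    thus "\<exists>k. (\<sigma> ^^ k) a = b" by blast
  qed
  interpret P: perm_on ?p ?D by (rule perm_on_face[OF rs])
  have corb: "card (orb ?p a) = d" if "a \<in> ?D" for a
  proof -
    note H_that = that
    obtain x i where xi: "i < d" "a = (x, x + q i)" using dartform[OF H_that] by blast
    have "orb ?p a = (\<lambda>j. (?p ^^ j) a) ` {0..<d}"
    proof
      show "orb ?p a \<subseteq> (\<lambda>j. (?p ^^ j) a) ` {0..<d}"
      proof
        fix b assume "b \<in> orb ?p a"
        then obtain m where m: "b = (?p ^^ m) a" unfolding orb_def by auto
        have per: "(?p ^^ (d * (m div d))) a = a" by (rule P.period_mult[OF pper[OF H_that]])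
        have "(?p ^^ m) a = (?p ^^ (m mod d + d * (m div d))) a" by simp
        also have "\<dots> = (?p ^^ (m mod d)) ((?p ^^ (d * (m div d))) a)" by (simp only: funpow_add o_apply)
        finally have "(?p ^^ m) a = (?p ^^ (m mod d)) a" unfolding per .
        moreover have "m mod d < d" using d4 by simp
        ultimately show "b \<in> (\<lambda>j. (?p ^^ j) a) ` {0..<d}" using m by auto
      qed
      show "(\<lambda>j. (?p ^^ j) a) ` {0..<d} \<subseteq> orb ?p a" unfolding orb_def by auto
    qed
    moreover have "inj_on (\<lambda>j. (?p ^^ j) a) {0..<d}"
    proof (rule inj_onI)
      fix j j' assume j: "j \<in> {0..<d}" and j': "j' \<in> {0..<d}" and e: "(?p ^^ j) a = (?p ^^ j') a"
      have e2: "(xs x i j, xs x i j + q (ij i j)) = (xs x i j', xs x i j' + q (ij i j'))"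
        using e unfolding xi(2) ppow[OF xi(1)] .
      have h1: "xs x i j = xs x i j'" using arg_cong[OF e2, of fst] by (simp only: fst_conv)
      have h2: "xs x i j + q (ij i j) = xs x i j' + q (ij i j')" using arg_cong[OF e2, of snd] by (simp only: snd_conv)
      have "q (ij i j) = q (ij i j')" using h1 h2 by (metis add_left_cancel)
      hence "ij i j = ij i j'" using qinj ijd by blast
      thus "j = j'" using ijinj j j' by auto
    qed
    ultimately show ?thesis by (simp add: card_image)
  qed
  have "d * card (faces UNIV inv_cayley_adj \<sigma>) = card ?D"
    unfolding faces_orb by (rule P.count_exact) (rule corb)
  also have "\<dots> = card (UNIV :: 'a set) * d" using card_darts[where 'a='a] cardS by simp
  finally have "card (faces UNIV inv_cayley_adj \<sigma>) = card (UNIV :: 'a set)" using d4 by simp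
  thus ?thesis using r1 rs cardS unfolding d_def by blast
qed



lemma to_iso:
  assumes ch: "CHAR('a::comm_ring_1) = 2^n"
    and all: "\<And>x::'a. \<exists>j::int. x = of_int j"
  shows "iso_to_Zmod TYPE('a) (2^n)"
proof -
  define m :: int where "m = 2^n"
  have mpos: "m > 0" unfolding m_def by simp
  have eq: "(of_int a :: 'a) = of_int b \<longleftrightarrow> a mod m = b mod m" for a b
  proof -
    have "(of_int a :: 'a) = of_int b \<longleftrightarrow> (of_int (a - b) :: 'a) = 0" by simp
    also have "\<dots> \<longleftrightarrow> m dvd a - b" unfolding of_int_eq_0_iff_char_dvd ch m_def by simp
    also have "\<dots> \<longleftrightarrow> a mod m = b mod m" by (simp add: mod_eq_dvd_iff)
    finally show ?thesis .
  qed
  define f where "f x = (SOME j. x = of_int j) mod m" for x :: 'a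
  have fx: "of_int (f x) = x" for x
  proof -
    have "x = of_int (SOME j. x = (of_int j :: 'a))" using someI_ex[OF all[of x]] .
    moreover have "(of_int (f x) :: 'a) = of_int (SOME j. x = (of_int j :: 'a))"
      unfolding f_def eq by simp
    ultimately show ?thesis by simp
  qed
  have frange: "0 \<le> f x \<and> f x < m" for x unfolding f_def using mpos by simp
  have fof: "f (of_int j) = j mod m" for j
  proof -
    have "(of_int (f (of_int j)) :: 'a) = of_int j" by (rule fx)
    hence "f (of_int j) mod m = j mod m" unfolding eq .
    thus ?thesis using frange[of "of_int j"] by simp
  qed
  have bij: "bij_betw f UNIV {0..<m}"
    unfolding bij_betw_def
  proof
    show "inj f" by (rule inj_onI) (metis fx)
    show "range f = {0..<m}"
    proof
      show "range f \<subseteq> {0..<m}" using frange by auto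
      show "{0..<m} \<subseteq> range f"
      proof
        fix k assume "k \<in> {0..<m}"
        hence "f (of_int k) = k" using fof by simp
        thus "k \<in> range f" by (metis rangeI)
      qed
    qed
  qed
  have add: "f (x + y) = (f x + f y) mod m" for x y
  proof -
    have "x + y = of_int (f x + f y)" by (simp only: of_int_add fx)
    hence "f (x + y) = f (of_int (f x + f y))" by (rule arg_cong)
    thus ?thesis by (simp only: fof)
  qed
  have mul: "f (x * y) = (f x * f y) mod m" for x y
  proof -
    have "x * y = of_int (f x * f y)" by (simp only: of_int_mult fx)
    hence "f (x * y) = f (of_int (f x * f y))" by (rule arg_cong)
    thus ?thesis by (simp only: fof)
  qed
  have one: "f 1 = 1 mod m" using fof[of 1] by simp
  show ?thesis unfolding iso_to_Zmod_def m_def[symmetric] using bij add mul one by blast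
qed

lemma from_iso:
  assumes iso: "iso_to_Zmod TYPE('a::comm_ring_1) (2^n)"
  shows "\<exists>k::nat. x = (of_nat k :: 'a)"
proof -
  define m :: int where "m = 2^n"
  have mpos: "m > 0" unfolding m_def by simp
  obtain f :: "'a \<Rightarrow> int" where bij: "bij_betw f UNIV {0..<m}"
    and add: "\<And>x y. f (x + y) = (f x + f y) mod m" and one: "f 1 = 1 mod m"
    using iso unfolding iso_to_Zmod_def m_def by blast
  have g: "f (of_nat (Suc k)) = int (Suc k) mod m" for k
  proof (induction k)
    case 0 then show ?case using one by simp
  next
    case (Suc k)
    have "(of_nat (Suc (Suc k)) :: 'a) = of_nat (Suc k) + 1" by (metis of_nat_Suc add.commute)
    hence "f (of_nat (Suc (Suc k))) = f (of_nat (Suc k) + 1)" by (rule arg_cong)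
    also have "\<dots> = (f (of_nat (Suc k)) + f 1) mod m" by (rule add)
    also have "\<dots> = (int (Suc k) mod m + 1 mod m) mod m" by (simp only: Suc.IH one)
    also have "\<dots> = (int (Suc k) + 1) mod m" by (rule mod_add_eq)
    also have "\<dots> = int (Suc (Suc k)) mod m" by simp
    finally show ?case .
  qed
  define j where "j = f x"
  have jr: "0 \<le> j" "j < m" using bij unfolding j_def bij_betw_def by auto
  define K where "K = nat j + nat m"
  have K: "K = Suc (K - 1)" unfolding K_def using mpos by simp
  have "f (of_nat K) = int K mod m" using g[of "K - 1"] K by simp
  also have "int K = j + m" unfolding K_def using jr mpos by simp
  also have "(j + m) mod m = j" using jr by simp
  finally have "f (of_nat K) = f x" unfolding j_def .
  hence "of_nat K = x" using bij unfolding bij_betw_def inj_on_def by blast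
  thus ?thesis by metis
qed

lemma conn_all:
  assumes all: "\<And>x::'a::comm_ring_1. \<exists>k::nat. x = of_nat k"
  shows "graph_connected (UNIV :: 'a set) inv_cayley_adj"
proof -
  let ?D = "darts (UNIV :: 'a set) inv_cayley_adj"
  have one: "(1::'a) \<in> invs" unfolding invs_def by simp
  have step: "(x, x + of_nat k) \<in> ?D\<^sup>*" for x :: 'a and k
  proof (induction k)
    case 0 then show ?case by simp
  next
    case (Suc k)
    have "(x + of_nat k, x + of_nat k + 1) \<in> ?D" unfolding dart_iff using one by simp
    hence "(x, x + of_nat k + 1) \<in> ?D\<^sup>*" using Suc by (rule rtrancl_into_rtrancl[rotated])
    moreover have "x + of_nat (Suc k) = x + of_nat k + (1::'a)" by (metis of_nat_Suc add.commute add.assoc)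
    ultimately show ?case by (simp only:)
  qed
  show ?thesis unfolding graph_connected_def
  proof (intro conjI ballI)
    fix x y :: 'a
    obtain k where "y - x = of_nat k" using all by blast
    hence "y = x + of_nat k" by (simp add: algebra_simps)
    thus "(x, y) \<in> ?D\<^sup>*" using step by simp
  qed simp
qed

lemma invs_card4_of:
  assumes n3: "n \<ge> 3" and ch: "CHAR('a::comm_ring_1) = 2^n"
    and all: "\<And>x::'a. \<exists>k::nat. x = of_nat k"
  shows "card (invs :: 'a set) = 4"
proof -
  define w where "w = 1 + (of_nat (2^(n-1)) :: 'a)"
  note F = four_invs[OF n3 ch, folded w_def]
  define N :: nat where "N = 2^(n-2)"
  have e1: "2 + (n - 2) = n" "1 + (n - 2) = n - 1" using n3 by simp_all
  have N4: "4 * N = 2^n"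
  proof -
    have "(2::nat)^(2 + (n-2)) = 2^2 * 2^(n-2)" by (rule power_add)
    thus ?thesis unfolding e1 N_def by simp
  qed
  have N2: "2 * N = 2^(n-1)"
  proof -
    have "(2::nat)^(1 + (n-2)) = 2^1 * 2^(n-2)" by (rule power_add)
    thus ?thesis unfolding e1 N_def by simp
  qed
  have N1: "N \<ge> 1" unfolding N_def by simp
  have z: "(of_nat (4 * N) :: 'a) = 0" unfolding N4 using ch by (metis of_nat_CHAR)
  have sub: "invs \<subseteq> {1, -1, w, -w}"
  proof
    fix u :: 'a assume u: "u \<in> invs"
    obtain k0 where k0: "u = of_nat k0" using all by blast
    define k where "k = k0 mod (4 * N)"
    have "k0 = k + 4 * N * (k0 div (4 * N))" unfolding k_def by simp
    hence "(of_nat k0 :: 'a) = of_nat k + of_nat (4 * N) * of_nat (k0 div (4 * N))"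
      by (metis of_nat_add of_nat_mult)
    hence uk: "u = of_nat k" using k0 z by simp
    have klt: "k < 4 * N" unfolding k_def using N1 by simp
    have uu: "u * u = 1" using u unfolding invs_def by (simp add: power2_eq_square)
    have k1: "k \<ge> 1"
    proof (rule ccontr)
      assume "\<not> k \<ge> 1" hence "k = 0" by simp
      hence "u = 0" using uk by simp
      thus False using uu by simp
    qed
    show "u \<in> {1, -1, w, -w}"
    proof (cases "k = 1")
      case True thus ?thesis using uk by simp
    next
      case False
      hence "1 < k * k" using k1 by (metis One_nat_def less_1_mult le_neq_implies_less)
      moreover have "(of_nat (k * k) :: 'a) = of_nat 1" using uu uk by simp
      ultimately have "CHAR('a) dvd k * k - 1" using of_nat_eq_iff_char_dvd[of 1 "k * k"] by (metis)
      hence "4 * N dvd k * k - 1" using ch N4 by simp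
      hence "k = 1 \<or> k = 2 * N + 1 \<or> k = 2 * N - 1 \<or> k = 4 * N - 1"
        using sq1[OF N_def _ klt k1] n3 by simp
      moreover have "(of_nat (2 * N + 1) :: 'a) = w" unfolding w_def N2 by simp
      moreover have "(of_nat (2 * N - 1) :: 'a) = - w"
      proof -
        have "(of_nat (2 * N - 1) :: 'a) + w = of_nat (2 * N - 1 + 1 + 2 * N)" unfolding w_def N2[symmetric] by simp
        also have "2 * N - 1 + 1 + 2 * N = 4 * N" using N1 by simp
        finally show ?thesis using z by (simp add: eq_neg_iff_add_eq_0)
      qed
      moreover have "(of_nat (4 * N - 1) :: 'a) = - 1"
      proof -
        have "(of_nat (4 * N - 1) :: 'a) + 1 = of_nat (4 * N - 1 + 1)" by simp
        also have "4 * N - 1 + 1 = 4 * N" using N1 by simp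
        finally show ?thesis using z by (simp add: eq_neg_iff_add_eq_0)
      qed
      ultimately show ?thesis using uk by auto
    qed
  qed
  have "card (invs :: 'a set) \<le> 4" using card_mono[OF _ sub] F(2) by simp
  moreover have "card {1, -1, w, -w} \<le> card (invs :: 'a set)"
    by (rule card_mono) (use F(3) sub finite_subset in auto)
  ultimately show ?thesis using F(2) by simp
qed

lemma conn_gives_int:
  assumes n3: "n \<ge> 3" and ch: "CHAR('a::{comm_ring_1,finite}) = 2^n"
    and conn: "graph_connected (UNIV :: 'a set) inv_cayley_adj" and c4: "card (invs :: 'a set) = 4"
  shows "\<exists>j::int. x = (of_int j :: 'a)"
proof -
  define w where "w = 1 + (of_nat (2^(n-1)) :: 'a)"
  note F = four_invs[OF n3 ch, folded w_def]
  have eqS: "{1, -1, w, -w} = (invs :: 'a set)"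
    by (rule card_subset_eq) (use F(2,3) c4 in auto)
  have invsZ: "\<exists>j::int. s = of_int j" if "s \<in> invs" for s :: 'a
  proof -
    have "s \<in> {1, -1, w, -w}" using that eqS by simp
    moreover have "w = of_int (1 + 2^(n-1))" unfolding w_def by simp
    moreover have "-w = of_int (- (1 + 2^(n-1)))" unfolding w_def by simp
    moreover have "(1::'a) = of_int 1" "(-1::'a) = of_int (-1)" by simp_all
    ultimately show ?thesis by blast
  qed
  let ?D = "darts (UNIV :: 'a set) inv_cayley_adj"
  have "(0, x) \<in> ?D\<^sup>*" using conn unfolding graph_connected_def by blast
  thus ?thesis
  proof (induction rule: rtrancl_induct)
    case base
    then show ?case by (intro exI[of _ 0]) simp
  next
    case (step y z)
    obtain j where j: "y = of_int j" using step.IH by blast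
    have "z - y \<in> invs" using step.hyps(2) by (metis dart_iff surj_pair)
    then obtain i where i: "z - y = of_int i" using invsZ by blast
    have "z = of_int (j + i)" using i j by (simp add: algebra_simps)
    thus ?case by blast
  qed
qed



theorem mainTheorem6:
  fixes n :: nat
  assumes "local_ring TYPE('a::{comm_ring_1, finite})"
    and "n \<ge> 3"
    and "CHAR('a) = 2 ^ n"
  shows "(graph_genus (UNIV :: 'a set) inv_cayley_adj = 1
            \<longleftrightarrow> graph_connected (UNIV :: 'a set) inv_cayley_adj
                \<and> regular (UNIV :: 'a set) inv_cayley_adj 4)
       \<and> (graph_connected (UNIV :: 'a set) inv_cayley_adj
                \<and> regular (UNIV :: 'a set) inv_cayley_adj 4
            \<longleftrightarrow> iso_to_Zmod TYPE('a) (2 ^ n))"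
proof -
  note n3 = assms(2) and ch = assms(3)
  let ?U = "UNIV :: 'a set"
  let ?A = "inv_cayley_adj :: 'a \<Rightarrow> 'a \<Rightarrow> bool"
  define V where "V = card ?U"
  define c where "c = card (components ?U ?A)"
  define E where "E = num_edges ?U ?A"
  define d where "d = card (invs :: 'a set)"
  have Vpos: "V > 0" unfolding V_def by (simp add: card_gt_0_iff)
  have c1: "c \<ge> 1" unfolding c_def by (rule components_card_ge1)
  have cconn: "c = 1 \<longleftrightarrow> graph_connected ?U ?A" unfolding c_def by (rule components_card1_iff)
  have reg: "regular ?U ?A 4 \<longleftrightarrow> d = 4" unfolding d_def by (rule regular_iff)
  have hD: "card (darts ?U ?A) = V * d" unfolding V_def d_def by (rule card_darts)
  have hE: "2 * E = V * d" unfolding E_def using num_edges_darts[where 'a='a] hD by simp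
  have iso0: "{v \<in> ?U. \<forall>w\<in>?U. \<not> ?A v w} = {}"
  proof -
    have "?A v (v + 1)" for v :: 'a unfolding adj_iff invs_def by simp
    thus ?thesis by blast
  qed
  obtain \<sigma>0 r where r1: "r \<ge> 1" and dr: "d = 4 * r" and rs0: "rotation_system ?U ?A \<sigma>0"
    and F0: "card (faces ?U ?A \<sigma>0) = V"
    using construction[OF n3 ch] unfolding d_def V_def by blast
  define R where "R = r - 1"
  have rR: "r = R + 1" unfolding R_def using r1 by simp
  define X where "X = V * R"
  have EX: "E = 2 * X + 2 * V" using hE unfolding dr rR X_def by (simp add: algebra_simps)
  define val where "val \<sigma> = 2 * int c - int V + int E - int (card (faces ?U ?A \<sigma>))
      - int (card {v \<in> ?U. \<forall>w\<in>?U. \<not> ?A v w})" for \<sigma>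
  have val_eq: "graph_genus ?U ?A = (LEAST g :: nat. \<exists>\<sigma>. rotation_system ?U ?A \<sigma> \<and> 2 * int g = val \<sigma>)"
    unfolding graph_genus_def val_def c_def V_def E_def ..
  have low: "val \<sigma> \<ge> 2 * int c + int X" if "rotation_system ?U ?A \<sigma>" for \<sigma>
  proof -
    have "4 * card (faces ?U ?A \<sigma>) \<le> card (darts ?U ?A)" by (rule lower_faces[OF n3 ch that])
    hence "4 * card (faces ?U ?A \<sigma>) \<le> 4 * (X + V)" unfolding hD dr rR X_def by (simp add: algebra_simps)
    hence "card (faces ?U ?A \<sigma>) \<le> X + V" by simp
    thus ?thesis unfolding val_def iso0 EX by simp
  qed
  have v0: "val \<sigma>0 = 2 * int (c + X)" unfolding val_def iso0 EX F0 by simp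
  define g0 where "g0 = c + X"
  have ex0: "\<exists>\<sigma>. rotation_system ?U ?A \<sigma> \<and> 2 * int g0 = val \<sigma>"
    using rs0 v0 unfolding g0_def by auto
  define gen where "gen = graph_genus ?U ?A"
  have gle: "gen \<le> g0" unfolding gen_def val_eq by (rule Least_le) (rule ex0)
  have gin: "\<exists>\<sigma>. rotation_system ?U ?A \<sigma> \<and> 2 * int gen = val \<sigma>"
    unfolding gen_def val_eq by (rule LeastI) (rule ex0)
  then obtain \<sigma>1 where rs1: "rotation_system ?U ?A \<sigma>1" and g1: "2 * int gen = val \<sigma>1" by blast
  have gge: "2 * int gen \<ge> 2 * int c + int X" using low[OF rs1] g1 by simp
  have part1: "gen = 1 \<longleftrightarrow> graph_connected ?U ?A \<and> regular ?U ?A 4"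
  proof
    assume "gen = 1"
    hence "c = 1" "X = 0" using gge c1 by auto
    hence "R = 0" using Vpos unfolding X_def by simp
    hence "d = 4" unfolding dr rR by simp
    thus "graph_connected ?U ?A \<and> regular ?U ?A 4" using cconn reg \<open>c = 1\<close> by simp
  next
    assume "graph_connected ?U ?A \<and> regular ?U ?A 4"
    hence "c = 1" "d = 4" using cconn reg by auto
    hence "R = 0" unfolding dr rR by simp
    hence "X = 0" unfolding X_def by simp
    thus "gen = 1" using gle gge \<open>c = 1\<close> unfolding g0_def by simp
  qed
  have part2: "graph_connected ?U ?A \<and> regular ?U ?A 4 \<longleftrightarrow> iso_to_Zmod TYPE('a) (2 ^ n)"
  proof
    assume h: "graph_connected ?U ?A \<and> regular ?U ?A 4"
    hence "card (invs :: 'a set) = 4" using reg unfolding d_def by simp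
    hence "\<exists>j::int. x = (of_int j :: 'a)" for x using conn_gives_int[OF n3 ch] h by blast
    thus "iso_to_Zmod TYPE('a) (2 ^ n)" using to_iso[OF ch] by blast
  next
    assume "iso_to_Zmod TYPE('a) (2 ^ n)"
    hence all: "\<exists>k::nat. x = (of_nat k :: 'a)" for x using from_iso by blast
    have "graph_connected ?U ?A" using conn_all all by blast
    moreover have "card (invs :: 'a set) = 4" using invs_card4_of[OF n3 ch] all by blast
    ultimately show "graph_connected ?U ?A \<and> regular ?U ?A 4" using reg unfolding d_def by simp
  qed
  show ?thesis using part1 part2 unfolding gen_def by simp
qed



end
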